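(* Let $\lambda\in(\frac16,\frac56)$. For every $x_0\in[0,1]$, $h_{F^\lambda}(x_0)\le1$, and $h_{F^\lambda}(x_0)=1$ if $x_0\in\widetilde{\mathcal E}$.
   Context: Construction: $F^\lambda_0\equiv0$ on $[0,1]$. Given $F^\lambda_n$ with its $4^n$ closed intervals of generation $n$ (covering $[0,1]$, disjoint interiors, $F^\lambda_n$ affine on each), on each interval $[a,b]$ of generation $n$, with $\ell=b-a$ and slope $m$, $F^\lambda_{n+1}$ coincides with $F^\lambda_n$ at $a,a+\ell/3,a+2\ell/3,b$, equals $F^\lambda_n(a+\ell/2)+\lambda\ell\sqrt{1+m^2}$ at $a+\ell/2$, and is affine on $[a,a+\ell/3],[a+\ell/3,a+\ell/2],[a+\ell/2,a+2\ell/3],[a+2\ell/3,b]$. $F^\lambda=\lim_nF^\lambda_n$. Pointwise exponent: for bounded $f$, $f\in\mathcal C^\alpha(x_0)$ if there exist a polynomial $P$ of degree at most $\lfloor\alpha\rfloor$ and $C,\delta>0$ with $|f(x)-P(x-x_0)|\le C|x-x_0|^\alpha$ whenever $|x-x_0|<\delta$; $h_f(x_0)=\sup\{\alpha\ge0:f\in\mathcal C^\alpha(x_0)\}$. Dynamics: $T(x)=3x$ on $[0,\frac13)$, $6x-2$ on $[\frac13,\frac12)$, $4-6x$ on $[\frac12,\frac23)$, $3x-2$ on $[\frac23,1]$; $U(x)=0,1,2,3$ on these intervals; $u_n(x)=U(T^nx)$; $\beta_{1,2}(x,n)=\#\{k<n:u_k(x)\in\{1,2\}\}$. $\widetilde{\mathcal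 E}$ is the set of $x$ for which $(\beta_{1,2}(x,n))_n$ is eventually constant. *)

theory Defs
  imports "HOL-Analysis.Analysis" "HOL-Computational_Algebra.Polynomial"
begin

text \<open>A generation-n piecewise affine function F_n is represented by the sorted list of
  its nodes (endpoints of the generation-n intervals) together with its values there.\<close>

fun refine :: "real \<Rightarrow> (real \<times> real) list \<Rightarrow> (real \<times> real) list" where
  "refine lam ((a, fa) # (b, fb) # rest) =
     (let l = b - a; m = (fb - fa) / l in
      (a, fa)
      # (a + l/3, fa + m * (l/3))
      # (a + l/2, fa + m * (l/2) + lam * l * sqrt (1 + m^2))
      # (a + 2*l/3, fa + m * (2*l/3))
      # refine lam ((b, fb) # rest))"
| "refine lam [p] = [p]"
| "refine lam [] = []"

definition nodes :: "real \<Rightarrow> nat \<Rightarrow> (real \<times> real) list" where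
  "nodes lam n = (refine lam ^^ n) [(0, 0), (1, 0)]"

fun interp :: "(real \<times> real) list \<Rightarrow> real \<Rightarrow> real" where
  "interp ((a, fa) # (b, fb) # rest) x =
     (if x \<le> b then fa + (fb - fa) / (b - a) * (x - a) else interp ((b, fb) # rest) x)"
| "interp [p] x = snd p"
| "interp [] x = 0"

definition Fn :: "real \<Rightarrow> nat \<Rightarrow> real \<Rightarrow> real" where
  "Fn lam n x = interp (nodes lam n) x"

definition F :: "real \<Rightarrow> real \<Rightarrow> real" where
  "F lam x = lim (\<lambda>n. Fn lam n x)"

definition pointwise_holder :: "(real \<Rightarrow> real) \<Rightarrow> real \<Rightarrow> real \<Rightarrow> bool" where
  "pointwise_holder f alpha x0 \<longleftrightarrow>
     (\<exists>P :: real poly. \<exists>C \<delta>. degree P \<le> nat \<lfloor>alpha\<rfloor> \<and> C > 0 \<and> \<delta> > 0 \<and>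
        (\<forall>x \<in> {0..1}. \<bar>x - x0\<bar> < \<delta> \<longrightarrow> \<bar>f x - poly P (x - x0)\<bar> \<le> C * \<bar>x - x0\<bar> powr alpha))"

definition holder_exponent :: "(real \<Rightarrow> real) \<Rightarrow> real \<Rightarrow> ereal" where
  "holder_exponent f x0 = Sup (ereal ` {alpha. alpha \<ge> 0 \<and> pointwise_holder f alpha x0})"

definition T :: "real \<Rightarrow> real" where
  "T x = (if x < 1/3 then 3*x else if x < 1/2 then 6*x - 2
          else if x < 2/3 then 4 - 6*x else 3*x - 2)"

definition U :: "real \<Rightarrow> nat" where
  "U x = (if x < 1/3 then 0 else if x < 1/2 then 1 else if x < 2/3 then 2 else 3)"

definition u :: "nat \<Rightarrow> real \<Rightarrow> nat" where
  "u n x = U ((T ^^ n) x)"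

definition beta12 :: "real \<Rightarrow> nat \<Rightarrow> nat" where
  "beta12 x n = card {k. k < n \<and> u k x \<in> {1, 2}}"

definition E_tilde :: "real set" where
  "E_tilde = {x. \<exists>N. \<forall>n \<ge> N. beta12 x n = beta12 x N}"

end

theory Submission
  imports Defs "HOL-Computational_Algebra.Fundamental_Theorem_Algebra"
begin


datatype seg = Seg (sa: real) (sfa: real) (sb: real) (sfb: real)

definition nd :: "real \<Rightarrow> seg \<Rightarrow> nat \<Rightarrow> real \<times> real" where
  "nd lam s k = (let a = sa s; fa = sfa s; b = sb s; fb = sfb s; l = b - a; m = (fb - fa) / l in
     if k = 0 then (a, fa)
     else if k = 1 then (a + l/3, fa + m * (l/3))
     else if k = 2 then (a + l/2, fa + m * (l/2) + lam * l * sqrt (1 + m^2))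
     else if k = 3 then (a + 2*l/3, fa + m * (2*l/3))
     else (b, fb))"

definition child :: "real \<Rightarrow> seg \<Rightarrow> nat \<Rightarrow> seg" where
  "child lam s k = Seg (fst (nd lam s k)) (snd (nd lam s k)) (fst (nd lam s (Suc k))) (snd (nd lam s (Suc k)))"

definition pick :: "real \<Rightarrow> seg \<Rightarrow> real \<Rightarrow> nat" where
  "pick lam s x = (if x \<le> fst (nd lam s 1) then 0 else if x \<le> fst (nd lam s 2) then 1
      else if x \<le> fst (nd lam s 3) then 2 else 3)"

definition lin :: "seg \<Rightarrow> real \<Rightarrow> real" where
  "lin s x = sfa s + (sfb s - sfa s) / (sb s - sa s) * (x - sa s)"

fun G :: "real \<Rightarrow> nat \<Rightarrow> seg \<Rightarrow> real \<Rightarrow> real" where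
  "G lam 0 s x = lin s x"
| "G lam (Suc n) s x = G lam n (child lam s (pick lam s x)) x"

lemma interp_split:
  assumes "length A \<ge> 2" "\<forall>p\<in>set A. fst p \<le> fst (last A)" "B \<noteq> []" "hd B = last A"
  shows "interp (butlast A @ B) x = (if x \<le> fst (last A) then interp A x else interp B x)"
  using assms
proof (induction A rule: induct_list012)
  case (3 a1 a2 zs)
  show ?case
  proof (cases zs)
    case Nil
    then show ?thesis using 3(3-) by (cases B; cases "tl B"; cases a1; cases a2; auto)
  next
    case (Cons a3 r)
    have ih: "interp (butlast (a2 # zs) @ B) x = (if x \<le> fst (last (a2#zs)) then interp (a2#zs) x else interp B x)"
      using 3 Cons by auto
    have "fst a2 \<le> fst (last (a1#a2#zs))" using 3(4) by auto
    then show ?thesis using ih Cons by (cases a1; cases a2; auto)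
  qed
qed auto

lemma refine_ne: "xs \<noteq> [] \<Longrightarrow> refine lam xs \<noteq> [] \<and> hd (refine lam xs) = hd xs \<and> last (refine lam xs) = last xs"
  by (induction lam xs rule: refine.induct) (auto simp: Let_def)

lemma refine_len: "length xs \<ge> 2 \<Longrightarrow> length (refine lam xs) \<ge> 2"
  by (induction lam xs rule: refine.induct) (auto simp: Let_def)

lemma refine_app: "xs \<noteq> [] \<Longrightarrow> refine lam (xs @ q # ys) = butlast (refine lam (xs @ [q])) @ refine lam (q # ys)"
proof (induction xs rule: induct_list012)
  case (2 p) then show ?case by (cases p; cases q) (auto simp: Let_def)
next
  case (3 p p' zs)
  have ne: "refine lam (p' # zs @ [q]) \<noteq> []" using refine_ne[of "p' # zs @ [q]"] by auto
  show ?case using 3(2) ne by (cases p; cases p') (auto simp: Let_def butlast_append)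
qed auto

lemma pow_ne: "xs \<noteq> [] \<Longrightarrow> (refine lam ^^ n) xs \<noteq> [] \<and> hd ((refine lam ^^ n) xs) = hd xs \<and> last ((refine lam ^^ n) xs) = last xs"
  by (induction n) (auto dest: refine_ne)

lemma pow_len: "length xs \<ge> 2 \<Longrightarrow> length ((refine lam ^^ n) xs) \<ge> 2"
  by (induction n) (auto intro: refine_len)

lemma pow_app: "xs \<noteq> [] \<Longrightarrow> (refine lam ^^ n) (xs @ q # ys) = butlast ((refine lam ^^ n) (xs @ [q])) @ (refine lam ^^ n) (q # ys)"
proof (induction n)
  case (Suc n)
  let ?A = "(refine lam ^^ n) (xs @ [q])" and ?B = "(refine lam ^^ n) (q # ys)"
  have lA: "length ?A \<ge> 2" using pow_len[of "xs @ [q]"] Suc(2) by (cases xs) auto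
  have lastA: "last ?A = q" using pow_ne[of "xs @ [q]"] by auto
  have hB: "?B = q # tl ?B" using pow_ne[of "q # ys" n lam] by (cases ?B) auto
  have Aeq: "?A = butlast ?A @ [q]" using lastA lA by (metis append_butlast_last_id list.size(3) not_numeral_le_zero)
  have bne: "butlast ?A \<noteq> []" using lA by (cases ?A rule: rev_cases) auto
  have "(refine lam ^^ Suc n) (xs @ q # ys) = refine lam (butlast ?A @ q # tl ?B)"
    using Suc hB by simp
  also have "\<dots> = butlast (refine lam (butlast ?A @ [q])) @ refine lam (q # tl ?B)"
    using refine_app[OF bne] by blast
  also have "\<dots> = butlast (refine lam ?A) @ refine lam ?B" using Aeq hB by metis
  finally show ?case by simp
qed simp

lemma nd_x: "sa s < sb s \<Longrightarrow> fst (nd lam s 0) = sa s \<and> fst (nd lam s 1) = sa s + (sb s - sa s)/3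
  \<and> fst (nd lam s 2) = sa s + (sb s - sa s)/2 \<and> fst (nd lam s 3) = sa s + 2*(sb s - sa s)/3 \<and> fst (nd lam s 4) = sb s"
  by (simp add: nd_def Let_def)

lemma nd_x_mono: "sa s < sb s \<Longrightarrow> k < 4 \<Longrightarrow> fst (nd lam s k) < fst (nd lam s (Suc k))"
  by (auto simp: nd_def Let_def less_Suc_eq numeral_eq_Suc field_simps)

lemma refine_two: "refine lam [p, q] = [nd lam (Seg (fst p) (snd p) (fst q) (snd q)) 0, nd lam (Seg (fst p) (snd p) (fst q) (snd q)) 1,
   nd lam (Seg (fst p) (snd p) (fst q) (snd q)) 2, nd lam (Seg (fst p) (snd p) (fst q) (snd q)) 3, nd lam (Seg (fst p) (snd p) (fst q) (snd q)) 4]"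
  by (cases p; cases q) (simp add: nd_def Let_def)

lemma conn: "fst p < fst q \<Longrightarrow> (\<forall>r\<in>set ((refine lam ^^ n) [p, q]). fst p \<le> fst r \<and> fst r \<le> fst q) \<and>
   (\<forall>x. fst p \<le> x \<and> x \<le> fst q \<longrightarrow> interp ((refine lam ^^ n) [p, q]) x = G lam n (Seg (fst p) (snd p) (fst q) (snd q)) x)"
proof (induction n arbitrary: p q)
  case 0
  then show ?case by (cases p; cases q) (auto simp: lin_def)
next
  case (Suc n)
  define s where "s = Seg (fst p) (snd p) (fst q) (snd q)"
  have ss: "sa s < sb s" using Suc(2) by (simp add: s_def)
  define W where "W k = (refine lam ^^ n) [nd lam s k, nd lam s (Suc k)]" for k
  have cs: "child lam s k = Seg (fst (nd lam s k)) (snd (nd lam s k)) (fst (nd lam s (Suc k))) (snd (nd lam s (Suc k)))" for k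
    by (simp add: child_def)
  have IH: "(\<forall>r\<in>set (W k). fst (nd lam s k) \<le> fst r \<and> fst r \<le> fst (nd lam s (Suc k))) \<and>
     (\<forall>x. fst (nd lam s k) \<le> x \<and> x \<le> fst (nd lam s (Suc k)) \<longrightarrow> interp (W k) x = G lam n (child lam s k) x)" if "k < 4" for k
    using Suc.IH[OF nd_x_mono[OF ss that]] unfolding W_def cs by blast
  have ne: "W k \<noteq> [] \<and> hd (W k) = nd lam s k \<and> last (W k) = nd lam s (Suc k) \<and> length (W k) \<ge> 2" for k
    using pow_ne[of "[nd lam s k, nd lam s (Suc k)]" n lam] pow_len[of "[nd lam s k, nd lam s (Suc k)]" n lam]
    unfolding W_def by auto
  have bne: "butlast (W k) \<noteq> []" for k using ne[of k] by (cases "W k" rule: rev_cases) auto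
  have hdb: "hd (butlast (W k) @ X) = nd lam s k" for k X using ne[of k] bne[of k]
    by (metis append_butlast_last_id hd_append2)
  have eq5: "(refine lam ^^ Suc n) [p, q] = (refine lam ^^ n) [nd lam s 0, nd lam s 1, nd lam s 2, nd lam s 3, nd lam s 4]"
    unfolding funpow_Suc_right comp_def by (simp only: refine_two s_def)
  have dec: "(refine lam ^^ Suc n) [p, q] = butlast (W 0) @ butlast (W 1) @ butlast (W 2) @ W 3"
  proof -
    have "(refine lam ^^ n) [nd lam s 0, nd lam s 1, nd lam s 2, nd lam s 3, nd lam s 4]
       = butlast (W 0) @ (refine lam ^^ n) [nd lam s 1, nd lam s 2, nd lam s 3, nd lam s 4]"
      using pow_app[of "[nd lam s 0]" n lam "nd lam s 1" "[nd lam s 2, nd lam s 3, nd lam s 4]"] by (simp add: W_def)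
    also have "(refine lam ^^ n) [nd lam s 1, nd lam s 2, nd lam s 3, nd lam s 4]
       = butlast (W 1) @ (refine lam ^^ n) [nd lam s 2, nd lam s 3, nd lam s 4]"
      using pow_app[of "[nd lam s 1]" n lam "nd lam s 2" "[nd lam s 3, nd lam s 4]"] by (simp add: W_def numeral_eq_Suc)
    also have "(refine lam ^^ n) [nd lam s 2, nd lam s 3, nd lam s 4]
       = butlast (W 2) @ W 3"
      using pow_app[of "[nd lam s 2]" n lam "nd lam s 3" "[nd lam s 4]"] by (simp add: W_def numeral_eq_Suc)
    finally show ?thesis using eq5 by simp
  qed
  have x: "fst (nd lam s 0) = fst p" "fst (nd lam s 4) = fst q" using ss by (simp_all add: nd_x s_def)
  have mono: "fst (nd lam s 0) < fst (nd lam s 1)" "fst (nd lam s 1) < fst (nd lam s 2)" "fst (nd lam s 2) < fst (nd lam s 3)" "fst (nd lam s 3) < fst (nd lam s 4)"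
    using nd_x_mono[OF ss, of 0 lam] nd_x_mono[OF ss, of 1 lam] nd_x_mono[OF ss, of 2 lam] nd_x_mono[OF ss, of 3 lam]
    by (simp_all add: numeral_eq_Suc)
  have setW: "set (W k) \<subseteq> {r. fst p \<le> fst r \<and> fst r \<le> fst q}" if "k < 4" for k
  proof -
    have "fst p \<le> fst (nd lam s k)" "fst (nd lam s (Suc k)) \<le> fst q"
      using that mono x by (auto simp: less_Suc_eq numeral_eq_Suc)
    then show ?thesis using IH[OF that] by force
  qed
  have part1: "\<forall>r\<in>set ((refine lam ^^ Suc n) [p, q]). fst p \<le> fst r \<and> fst r \<le> fst q"
    unfolding dec using setW[of 0] setW[of 1] setW[of 2] setW[of 3] by (auto dest: in_set_butlastD)
  have la: "\<forall>r\<in>set (W k). fst r \<le> fst (last (W k))" if "k < 4" for k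
    using IH[OF that] ne[of k] by auto
  have part2: "interp ((refine lam ^^ Suc n) [p, q]) x = G lam (Suc n) s x" if "fst p \<le> x" "x \<le> fst q" for x
  proof -
    have i1: "interp (butlast (W 0) @ butlast (W 1) @ butlast (W 2) @ W 3) x =
       (if x \<le> fst (nd lam s 1) then interp (W 0) x else interp (butlast (W 1) @ butlast (W 2) @ W 3) x)"
      using interp_split[of "W 0" "butlast (W 1) @ butlast (W 2) @ W 3" x] ne[of 0] la[of 0] hdb[of 1] bne[of 1] by simp
    have i2: "interp (butlast (W 1) @ butlast (W 2) @ W 3) x =
       (if x \<le> fst (nd lam s 2) then interp (W 1) x else interp (butlast (W 2) @ W 3) x)"
      using interp_split[of "W 1" "butlast (W 2) @ W 3" x] ne[of 1] la[of 1] hdb[of 2] bne[of 2] by (simp add: numeral_eq_Suc)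
    have i3: "interp (butlast (W 2) @ W 3) x =
       (if x \<le> fst (nd lam s 3) then interp (W 2) x else interp (W 3) x)"
      using interp_split[of "W 2" "W 3" x] ne[of 2] ne[of 3] la[of 2] by (simp add: numeral_eq_Suc)
    show ?thesis unfolding dec i1 i2 i3 using IH[of 0] IH[of 1] IH[of 2] IH[of 3] that mono x
      by (auto simp: pick_def numeral_eq_Suc)
  qed
  show ?case using part1 part2 by (simp add: s_def)
qed

lemma Fn_G: "x \<in> {0..1} \<Longrightarrow> Fn lam n x = G lam n (Seg 0 0 1 0) x"
  using conn[where p="(0,0)" and q="(1,0)" and lam=lam and n=n] by (simp add: Fn_def nodes_def)




definition slope :: "seg \<Rightarrow> real" where "slope s = (sfb s - sfa s) / (sb s - sa s)"
definition len :: "seg \<Rightarrow> real" where "len s = sb s - sa s"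
definition Ls :: "seg \<Rightarrow> real" where "Ls s = len s * sqrt (1 + (slope s)^2)"

lemma seg_form: "sa s < sb s \<Longrightarrow> s = Seg (sa s) (sfa s) (sa s + len s) (sfa s + slope s * len s) \<and> len s > 0"
  by (cases s) (simp add: len_def slope_def)

lemma child_eqs:
  fixes a fa l m :: real
  assumes "l > 0"
  shows "child lam (Seg a fa (a+l) (fa + m*l)) 0 = Seg a fa (a + l/3) (fa + m*(l/3))"
    "child lam (Seg a fa (a+l) (fa + m*l)) 1 = Seg (a + l/3) (fa + m*(l/3)) (a + l/2) (fa + m * (l/2) + lam * l * sqrt (1 + m^2))"
    "child lam (Seg a fa (a+l) (fa + m*l)) 2 = Seg (a + l/2) (fa + m * (l/2) + lam * l * sqrt (1 + m^2)) (a + 2*l/3) (fa + m*(2*l/3))"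
    "child lam (Seg a fa (a+l) (fa + m*l)) 3 = Seg (a + 2*l/3) (fa + m*(2*l/3)) (a+l) (fa + m*l)"
  using assms by (simp_all add: child_def nd_def Let_def numeral_eq_Suc)

lemma child_facts:
  fixes a fa l m :: real
  assumes l: "l > 0"
  defines "s \<equiv> Seg a fa (a+l) (fa + m*l)"
  defines "r \<equiv> sqrt (1 + m^2)"
  shows "slope (child lam s 0) = m" "slope (child lam s 3) = m"
    "slope (child lam s 1) = m + 6*lam*r" "slope (child lam s 2) = m - 6*lam*r"
    "len (child lam s 0) = l/3" "len (child lam s 3) = l/3"
    "len (child lam s 1) = l/6" "len (child lam s 2) = l/6"
    "lin (child lam s 0) x = lin s x" "lin (child lam s 3) x = lin s x"
    "lin (child lam s 1) x = lin s x + 6*lam*r*(x - (a + l/3))"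
    "lin (child lam s 2) x = lin s x + 6*lam*r*((a + 2*l/3) - x)"
    "lin s x = fa + m * (x - a)"
  unfolding s_def child_eqs[OF l] slope_def len_def lin_def r_def[symmetric] using l
  by (simp_all add: field_simps)

lemma sq_bound_gen: fixes m c s :: real assumes "c \<ge> 0" "s = 1 \<or> s = -1"
  shows "sqrt (1 + (m + s * c * sqrt (1 + m^2))^2) \<le> (1 + c) * sqrt (1 + m^2)"
proof -
  define r where "r = sqrt (1 + m^2)"
  have r0: "r \<ge> 0" by (simp add: r_def)
  have r2: "r^2 = 1 + m^2" by (simp add: r_def add_nonneg_nonneg)
  have mr: "\<bar>m\<bar> \<le> r" unfolding r_def by (metis real_sqrt_abs real_sqrt_le_mono le_add_same_cancel2 zero_le_one)
  have "s * m \<le> r" using mr assms(2) by auto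
  then have "c * (s * m * r) \<le> c * (r * r)" using assms(1) r0 by (intro mult_left_mono mult_right_mono) auto
  then have "1 + (m + s * c * r)^2 \<le> ((1 + c) * r)^2"
    using r2 assms(2) by (auto simp: power2_eq_square algebra_simps)
  then have "sqrt (1 + (m + s * c * r)^2) \<le> sqrt (((1 + c) * r)^2)" by (rule real_sqrt_le_mono)
  also have "\<dots> = (1 + c) * r" using r0 assms(1) by simp
  finally show ?thesis by (simp add: r_def)
qed

lemma seg_obtain:
  assumes "sa s < sb s"
  obtains a fa l m where "l > 0" "s = Seg a fa (a+l) (fa + m*l)"
  using seg_form[OF assms] by blast

lemma seg_basic: "l > 0 \<Longrightarrow> slope (Seg a fa (a+l) (fa + m*l)) = m \<and> len (Seg a fa (a+l) (fa + m*l)) = l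
   \<and> Ls (Seg a fa (a+l) (fa + m*l)) = l * sqrt (1 + m^2)"
  by (simp add: slope_def len_def Ls_def)

lemma child_valid: "sa s < sb s \<Longrightarrow> k < 4 \<Longrightarrow> sa (child lam s k) < sb (child lam s k)"
  using nd_x_mono by (simp add: child_def)

lemma child_ends: "sa (child lam s k) = fst (nd lam s k)" "sb (child lam s k) = fst (nd lam s (Suc k))"
  "sfa (child lam s k) = snd (nd lam s k)" "sfb (child lam s k) = snd (nd lam s (Suc k))"
  by (simp_all add: child_def)

lemma nd_end: "fst (nd lam s 0) = sa s" "snd (nd lam s 0) = sfa s" "fst (nd lam s 4) = sb s" "snd (nd lam s 4) = sfb s"
  by (simp_all add: nd_def Let_def)

lemma pick_range:
  assumes "sa s < sb s" "sa s \<le> x" "x \<le> sb s"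
  shows "pick lam s x < 4 \<and> sa (child lam s (pick lam s x)) \<le> x \<and> x \<le> sb (child lam s (pick lam s x))"
  using assms nd_x[OF assms(1), of lam] by (auto simp: pick_def child_ends numeral_eq_Suc)

lemma G_ends: "sa s < sb s \<Longrightarrow> G lam n s (sa s) = sfa s \<and> G lam n s (sb s) = sfb s"
proof (induction n arbitrary: s)
  case 0
  then show ?case by (simp add: lin_def)
next
  case (Suc n)
  have p0: "pick lam s (sa s) = 0" using Suc(2) nd_x[OF Suc(2), of lam] by (simp add: pick_def)
  have p3: "pick lam s (sb s) = 3" using Suc(2) nd_x[OF Suc(2), of lam] unfolding pick_def by (auto simp: field_simps)
  have v0: "sa (child lam s 0) < sb (child lam s 0)" and v3: "sa (child lam s 3) < sb (child lam s 3)"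
    using child_valid[OF Suc(2)] by auto
  have e: "sa (child lam s 0) = sa s" "sfa (child lam s 0) = sfa s" "sb (child lam s 3) = sb s" "sfb (child lam s 3) = sfb s"
    using nd_end by (simp_all add: child_ends numeral_eq_Suc)
  show ?case using Suc.IH[OF v0] Suc.IH[OF v3] p0 p3 e by simp
qed

lemma Ls_child:
  assumes "sa s < sb s" "k < 4" "1/6 \<le> lam"
  shows "Ls (child lam s k) \<le> (1/6 + lam) * Ls s"
proof -
  obtain a fa l m where l: "l > 0" and s: "s = Seg a fa (a+l) (fa + m*l)" using seg_obtain[OF assms(1)] .
  define r where "r = sqrt (1 + m^2)"
  have r0: "r \<ge> 0" by (simp add: r_def)
  have Lss: "Ls s = l * r" using seg_basic[OF l] s r_def by simp
  have b1: "sqrt (1 + (m + 6*lam*r)^2) \<le> (1 + 6*lam) * r"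
    using sq_bound_gen[of "6*lam" 1 m] assms(3) by (simp add: r_def)
  have b2: "sqrt (1 + (m - 6*lam*r)^2) \<le> (1 + 6*lam) * r"
    using sq_bound_gen[of "6*lam" "-1" m] assms(3) by (simp add: r_def)
  have "k = 0 \<or> k = 1 \<or> k = 2 \<or> k = 3" using assms(2) by auto
  then show ?thesis
  proof (elim disjE)
    assume k: "k = 0"
    have "Ls (child lam s k) = l/3 * r" unfolding k s Ls_def child_facts[OF l] r_def by simp
    moreover have "(1/3) * (l*r) \<le> (1/6+lam) * (l*r)" using assms(3) l r0 by (intro mult_right_mono) auto
    ultimately show ?thesis using Lss by simp
  next
    assume k: "k = 3"
    have "Ls (child lam s k) = l/3 * r" unfolding k s Ls_def child_facts[OF l] r_def by simp
    moreover have "(1/3) * (l*r) \<le> (1/6+lam) * (l*r)" using assms(3) l r0 by (intro mult_right_mono) auto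
    ultimately show ?thesis using Lss by simp
  next
    assume k: "k = 1"
    have "Ls (child lam s k) = l/6 * sqrt (1 + (m + 6*lam*r)^2)" unfolding k s Ls_def child_facts[OF l] r_def by simp
    also have "\<dots> \<le> l/6 * ((1 + 6*lam) * r)" using b1 l by (intro mult_left_mono) auto
    finally show ?thesis using Lss by (simp add: algebra_simps)
  next
    assume k: "k = 2"
    have "Ls (child lam s k) = l/6 * sqrt (1 + (m - 6*lam*r)^2)" unfolding k s Ls_def child_facts[OF l] r_def by simp
    also have "\<dots> \<le> l/6 * ((1 + 6*lam) * r)" using b2 l by (intro mult_left_mono) auto
    finally show ?thesis using Lss by (simp add: algebra_simps)
  qed
qed

lemma base_step:
  assumes "sa s < sb s" "sa s \<le> x" "x \<le> sb s" "0 \<le> lam"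
  shows "\<bar>lin (child lam s (pick lam s x)) x - lin s x\<bar> \<le> lam * Ls s"
proof -
  obtain a fa l m where l: "l > 0" and s: "s = Seg a fa (a+l) (fa + m*l)" using seg_obtain[OF assms(1)] .
  define r where "r = sqrt (1 + m^2)"
  have r0: "r \<ge> 0" by (simp add: r_def)
  have Lss: "Ls s = l * r" using seg_basic[OF l] s r_def by simp
  have x: "a \<le> x" "x \<le> a + l" using assms s by auto
  have nx: "fst (nd lam s 1) = a + l/3" "fst (nd lam s 2) = a + l/2" "fst (nd lam s 3) = a + 2*l/3"
    using nd_x[OF assms(1), of lam] s by auto
  have nx1: "fst (nd lam s (Suc 0)) = a + l/3" using nx(1) by simp
  note nx = nx nx1
  consider "x \<le> a + l/3" | "a + l/3 < x" "x \<le> a + l/2" | "a + l/2 < x" "x \<le> a + 2*l/3" | "a + 2*l/3 < x" by linarith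
  then show ?thesis
  proof cases
    case 1
    then have "pick lam s x = 0" by (simp add: pick_def nx)
    then show ?thesis using child_facts(9)[OF l] s Lss assms(4) l r0 by simp
  next
    case 4
    then have "pick lam s x = 3" using l by (simp add: pick_def nx)
    then show ?thesis using child_facts(10)[OF l] s Lss assms(4) l r0 by simp
  next
    case 2
    then have p: "pick lam s x = 1" using l by (simp add: pick_def nx)
    have "\<bar>6*lam*r*(x - (a + l/3))\<bar> \<le> lam * (l * r)"
    proof -
      have "0 \<le> 6*lam*r*(x - (a + l/3))" using 2 assms(4) r0 by simp
      moreover have "6*lam*r*(x - (a + l/3)) \<le> 6*lam*r*(l/6)"
        using 2 assms(4) r0 by (intro mult_left_mono) auto
      moreover have "6*lam*r*(l/6) = lam * (l * r)" by simp
      ultimately show ?thesis by (simp only: abs_of_nonneg)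
    qed
    then show ?thesis using child_facts(11)[OF l, of lam a fa m x] s Lss p by (simp add: r_def)
  next
    case 3
    then have p: "pick lam s x = 2" using l by (simp add: pick_def nx)
    have "\<bar>6*lam*r*((a + 2*l/3) - x)\<bar> \<le> lam * (l * r)"
    proof -
      have "0 \<le> 6*lam*r*((a + 2*l/3) - x)" using 3 assms(4) r0 by simp
      moreover have "6*lam*r*((a + 2*l/3) - x) \<le> 6*lam*r*(l/6)"
        using 3 assms(4) r0 by (intro mult_left_mono) auto
      moreover have "6*lam*r*(l/6) = lam * (l * r)" by simp
      ultimately show ?thesis by (simp only: abs_of_nonneg)
    qed
    then show ?thesis using child_facts(12)[OF l, of lam a fa m x] s Lss p by (simp add: r_def)
  qed
qed

lemma G_step:
  assumes "sa s < sb s" "sa s \<le> x" "x \<le> sb s" "1/6 \<le> lam"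
  shows "\<bar>G lam (Suc n) s x - G lam n s x\<bar> \<le> lam * (1/6 + lam)^n * Ls s"
  using assms
proof (induction n arbitrary: s)
  case 0
  then show ?case using base_step[OF 0(1-3)] by simp
next
  case (Suc n)
  let ?c = "child lam s (pick lam s x)"
  have pr: "pick lam s x < 4" "sa ?c \<le> x" "x \<le> sb ?c" using pick_range[OF Suc(2-4)] by auto
  have v: "sa ?c < sb ?c" using child_valid[OF Suc(2) pr(1)] .
  have "\<bar>G lam (Suc (Suc n)) s x - G lam (Suc n) s x\<bar> = \<bar>G lam (Suc n) ?c x - G lam n ?c x\<bar>" by simp
  also have "\<dots> \<le> lam * (1/6 + lam)^n * Ls ?c" using Suc.IH[OF v pr(2,3) Suc(5)] .
  also have "\<dots> \<le> lam * (1/6 + lam)^n * ((1/6 + lam) * Ls s)"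
    using Ls_child[OF Suc(2) pr(1) Suc(5)] Suc(5) by (intro mult_left_mono) auto
  finally show ?case by (simp add: algebra_simps)
qed

definition Fs :: "real \<Rightarrow> seg \<Rightarrow> real \<Rightarrow> real" where
  "Fs lam s x = lim (\<lambda>n. G lam n s x)"

definition KK :: "real \<Rightarrow> real" where "KK lam = lam / (5/6 - lam)"

lemma G_conv:
  assumes "sa s < sb s" "sa s \<le> x" "x \<le> sb s" "1/6 \<le> lam" "lam < 5/6"
  shows "(\<lambda>n. G lam n s x) \<longlonglongrightarrow> Fs lam s x \<and> \<bar>Fs lam s x - lin s x\<bar> \<le> KK lam * Ls s"
proof -
  define d where "d j = G lam (Suc j) s x - G lam j s x" for j
  define g where "g j = lam * Ls s * (1/6 + lam)^j" for j
  have rho: "0 \<le> 1/6 + lam" "1/6 + lam < 1" using assms by auto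
  have dg: "\<bar>d j\<bar> \<le> g j" for j using G_step[OF assms(1-4), of j] unfolding d_def g_def by (simp only: mult_ac)
  have sg: "summable g" unfolding g_def using rho by (intro summable_mult summable_geometric) simp
  have sd: "summable d" by (rule summable_comparison_test'[where N=0 and g=g]) (use dg sg in auto)
  have tel: "G lam n s x = lin s x + (\<Sum>j<n. d j)" for n
    using sum_lessThan_telescope[of "\<lambda>j. G lam j s x" n] by (simp add: d_def)
  have lim1: "(\<lambda>n. G lam n s x) \<longlonglongrightarrow> lin s x + suminf d"
    unfolding tel by (intro tendsto_add tendsto_const summable_LIMSEQ sd)
  then have fs: "Fs lam s x = lin s x + suminf d" unfolding Fs_def by (rule limI)
  have sad: "summable (\<lambda>j. \<bar>d j\<bar>)" by (rule summable_comparison_test'[where N=0 and g=g]) (use dg sg in auto)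
  have "\<bar>suminf d\<bar> \<le> (\<Sum>j. \<bar>d j\<bar>)" using summable_rabs[OF sad] by simp
  also have "\<dots> \<le> suminf g" using sad sg dg by (intro suminf_le) auto
  also have "suminf g = lam * Ls s * (1 / (1 - (1/6 + lam)))"
    unfolding g_def using rho by (subst suminf_mult) (auto simp: suminf_geometric)
  also have "\<dots> = KK lam * Ls s"
  proof -
    have "1 - (1/6 + lam) = 5/6 - lam" by simp
    then show ?thesis by (simp add: KK_def)
  qed
  finally show ?thesis using lim1 fs by simp
qed

lemma Fs_ends: "sa s < sb s \<Longrightarrow> Fs lam s (sa s) = sfa s \<and> Fs lam s (sb s) = sfb s"
  using G_ends[of s lam] by (simp add: Fs_def)

lemma Fs_pick:
  assumes "sa s < sb s" "sa s \<le> x" "x \<le> sb s" "1/6 \<le> lam" "lam < 5/6"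
  shows "Fs lam s x = Fs lam (child lam s (pick lam s x)) x"
proof -
  let ?c = "child lam s (pick lam s x)"
  have pr: "pick lam s x < 4" "sa ?c \<le> x" "x \<le> sb ?c" using pick_range[OF assms(1-3)] by auto
  have v: "sa ?c < sb ?c" using child_valid[OF assms(1) pr(1)] .
  have "(\<lambda>n. G lam n ?c x) \<longlonglongrightarrow> Fs lam ?c x" using G_conv[OF v pr(2,3) assms(4,5)] by simp
  then have "(\<lambda>n. G lam (Suc n) s x) \<longlonglongrightarrow> Fs lam ?c x" by simp
  then have "(\<lambda>n. G lam n s x) \<longlonglongrightarrow> Fs lam ?c x" by (rule LIMSEQ_imp_Suc)
  moreover have "(\<lambda>n. G lam n s x) \<longlonglongrightarrow> Fs lam s x" using G_conv[OF assms] by simp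
  ultimately show ?thesis using LIMSEQ_unique by blast
qed

lemma Fs_child:
  assumes "sa s < sb s" "k < 4" "sa (child lam s k) \<le> x" "x \<le> sb (child lam s k)" "1/6 \<le> lam" "lam < 5/6"
  shows "Fs lam s x = Fs lam (child lam s k) x"
proof -
  have nx: "fst (nd lam s 0) < fst (nd lam s 1)" "fst (nd lam s 1) < fst (nd lam s 2)" "fst (nd lam s 2) < fst (nd lam s 3)" "fst (nd lam s 3) < fst (nd lam s 4)"
    using nd_x_mono[OF assms(1), of 0 lam] nd_x_mono[OF assms(1), of 1 lam] nd_x_mono[OF assms(1), of 2 lam] nd_x_mono[OF assms(1), of 3 lam]
    by (simp_all add: numeral_eq_Suc)
  have x: "sa s \<le> x" "x \<le> sb s" using assms(2-4) nx nd_end[of lam s]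
    by (auto simp: child_ends less_Suc_eq numeral_eq_Suc)
  let ?p = "pick lam s x"
  have pr: "?p < 4" "sa (child lam s ?p) \<le> x" "x \<le> sb (child lam s ?p)" using pick_range[OF assms(1) x] by auto
  show ?thesis
  proof (cases "?p = k")
    case True
    then show ?thesis using Fs_pick[OF assms(1) x assms(5,6)] by simp
  next
    case False
        have vk: "sa (child lam s k) < sb (child lam s k)" using child_valid[OF assms(1,2)] .
    have vp: "sa (child lam s ?p) < sb (child lam s ?p)" using child_valid[OF assms(1) pr(1)] .
    have "(?p = Suc k \<and> x = sb (child lam s k)) \<or> (k = Suc ?p \<and> x = sa (child lam s k))"
    proof -
      have mono: "\<And>i j. i < j \<Longrightarrow> j \<le> 4 \<Longrightarrow> fst (nd lam s i) < fst (nd lam s j)"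
      proof -
        fix i j :: nat assume "i < j" "j \<le> 4"
        then show "fst (nd lam s i) < fst (nd lam s j)"
        proof (induction j)
          case 0 then show ?case by simp
        next
          case (Suc j)
          have step: "fst (nd lam s j) < fst (nd lam s (Suc j))" using nd_x_mono[OF assms(1)] Suc.prems by simp
          show ?case
          proof (cases "i = j")
            case True then show ?thesis using step by simp
          next
            case False then have ij: "i < j" using Suc.prems by simp
            have "j \<le> 4" using Suc.prems by simp
            then have "fst (nd lam s i) < fst (nd lam s j)" using Suc.IH ij by blast
            then show ?thesis using step by linarith
          qed
        qed
      qed
      have "?p < k \<or> k < ?p" using False by arith
      then show ?thesis
      proof
        assume "?p < k"
        then have "Suc ?p \<le> k" by simp
        then have "Suc ?p = k \<or> Suc ?p < k" by arith
        moreover have "fst (nd lam s (Suc ?p)) \<le> fst (nd lam s k)"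
          using \<open>Suc ?p \<le> k\<close> mono assms(2) by (cases "Suc ?p = k") (auto intro: less_imp_le)
        ultimately show ?thesis using pr assms(2-4) mono[of "Suc ?p" k] by (auto simp: child_ends)
      next
        assume "k < ?p"
        then have "Suc k = ?p \<or> Suc k < ?p" by arith
        then show ?thesis using pr assms(2-4) mono[of "Suc k" ?p] by (auto simp: child_ends)
      qed
    qed
    then show ?thesis
    proof
      assume h: "?p = Suc k \<and> x = sb (child lam s k)"
      have hp: "?p = Suc k" and hx: "x = sb (child lam s k)" using h by auto
      have e1: "sa (child lam s ?p) = x" and e2: "sfa (child lam s ?p) = sfb (child lam s k)"
        unfolding hp using hx by (simp_all add: child_ends)
      have "Fs lam (child lam s k) x = sfb (child lam s k)" using Fs_ends[OF vk] h by simp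
      moreover have "Fs lam (child lam s ?p) x = sfa (child lam s ?p)"
        using Fs_ends[OF vp] e1 by simp
      ultimately show ?thesis using Fs_pick[OF assms(1) x assms(5,6)] e2 by simp
    next
      assume h: "k = Suc ?p \<and> x = sa (child lam s k)"
      have hp: "k = Suc ?p" using h by (rule conjunct1)
      have hx: "x = sa (child lam s k)" using h by (rule conjunct2)
      have "sb (child lam s ?p) = fst (nd lam s (Suc ?p))" by (simp add: child_ends)
      also have "\<dots> = fst (nd lam s k)" using hp by simp
      also have "\<dots> = x" using hx by (simp add: child_ends)
      finally have e1: "sb (child lam s ?p) = x" .
      have "sfb (child lam s ?p) = snd (nd lam s (Suc ?p))" by (simp add: child_ends)
      also have "\<dots> = snd (nd lam s k)" using hp by simp
      also have "\<dots> = sfa (child lam s k)" by (simp add: child_ends)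
      finally have e2: "sfb (child lam s ?p) = sfa (child lam s k)" .
      have "Fs lam (child lam s k) x = sfa (child lam s k)" using Fs_ends[OF vk] hx by simp
      moreover have "Fs lam (child lam s ?p) x = sfb (child lam s ?p)"
        using Fs_ends[OF vp] e1 by simp
      ultimately show ?thesis using Fs_pick[OF assms(1) x assms(5,6)] e2 by simp
    qed
  qed
qed

lemma F_Fs: "x \<in> {0..1} \<Longrightarrow> F lam x = Fs lam (Seg 0 0 1 0) x"
  by (simp add: F_def Fs_def Fn_G)




lemma osc_end:
  assumes "sa s < sb s" "sa s \<le> x" "x \<le> sb s" "1/6 \<le> lam" "lam < 5/6"
  shows "\<bar>Fs lam s x - lin s x\<bar> \<le> KK lam * Ls s" "\<bar>lin s x - lin s y\<bar> \<le> Ls s * \<bar>x - y\<bar> / len s"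
    "\<bar>lin s x - sfa s\<bar> \<le> Ls s" "\<bar>lin s x - sfb s\<bar> \<le> Ls s"
proof -
  show "\<bar>Fs lam s x - lin s x\<bar> \<le> KK lam * Ls s" using G_conv[OF assms] by simp
  obtain a fa l m where l: "l > 0" and s: "s = Seg a fa (a+l) (fa + m*l)" using seg_obtain[OF assms(1)] .
  have mr: "\<bar>m\<bar> \<le> sqrt (1 + m^2)" by (metis real_sqrt_abs real_sqrt_le_mono le_add_same_cancel2 zero_le_one)
  have bs: "slope s = m" "len s = l" "Ls s = l * sqrt (1 + m^2)" using seg_basic[OF l] s by auto
  have lin: "lin s z = fa + m * (z - a)" for z using s l by (simp add: lin_def)
  have "\<bar>lin s x - lin s y\<bar> = \<bar>m\<bar> * \<bar>x - y\<bar>" unfolding lin by (simp add: abs_mult[symmetric] algebra_simps)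
  also have "\<dots> \<le> sqrt (1 + m^2) * \<bar>x - y\<bar>" using mr by (intro mult_right_mono) auto
  also have "\<dots> = Ls s * \<bar>x - y\<bar> / len s" using bs l by simp
  finally show "\<bar>lin s x - lin s y\<bar> \<le> Ls s * \<bar>x - y\<bar> / len s" .
  have xr: "\<bar>x - a\<bar> \<le> l" "\<bar>x - (a + l)\<bar> \<le> l" using assms s by auto
  have "\<bar>lin s x - sfa s\<bar> = \<bar>m\<bar> * \<bar>x - a\<bar>" unfolding lin using s by (simp add: abs_mult)
  also have "\<dots> \<le> sqrt (1 + m^2) * l" using mr xr by (intro mult_mono) auto
  finally show "\<bar>lin s x - sfa s\<bar> \<le> Ls s" using bs by (simp add: mult.commute)
  have "\<bar>lin s x - sfb s\<bar> = \<bar>m\<bar> * \<bar>x - (a + l)\<bar>" unfolding lin using s by (simp add: abs_mult[symmetric] algebra_simps)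
  also have "\<dots> \<le> sqrt (1 + m^2) * l" using mr xr by (intro mult_mono) auto
  finally show "\<bar>lin s x - sfb s\<bar> \<le> Ls s" using bs by (simp add: mult.commute)
qed

lemma KK_nonneg: "1/6 \<le> lam \<Longrightarrow> lam < 5/6 \<Longrightarrow> 0 \<le> KK lam"
  by (simp add: KK_def)

lemma Ls_nonneg: "sa s < sb s \<Longrightarrow> 0 \<le> Ls s"
  by (simp add: Ls_def len_def)

lemma osc:
  assumes "sa s < sb s" "sa s \<le> x" "x \<le> sb s" "sa s \<le> y" "y \<le> sb s" "1/6 \<le> lam" "lam < 5/6"
  shows "\<bar>Fs lam s x - Fs lam s y\<bar> \<le> (1 + 2 * KK lam) * Ls s"
proof -
  have a: "\<bar>Fs lam s x - lin s x\<bar> \<le> KK lam * Ls s" using osc_end(1)[OF assms(1-3,6,7)] .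
  have b: "\<bar>Fs lam s y - lin s y\<bar> \<le> KK lam * Ls s" using osc_end(1)[OF assms(1,4,5,6,7)] .
  have c: "\<bar>lin s x - lin s y\<bar> \<le> Ls s"
  proof -
    have "\<bar>lin s x - lin s y\<bar> \<le> Ls s * \<bar>x - y\<bar> / len s" using osc_end(2)[OF assms(1-3,6,7)] .
    also have "\<dots> \<le> Ls s * len s / len s"
    proof -
      have "\<bar>x - y\<bar> \<le> len s" using assms(2-5) by (simp add: len_def abs_le_iff)
      then show ?thesis using Ls_nonneg[OF assms(1)] assms(1)
        by (intro divide_right_mono mult_left_mono) (auto simp: len_def)
    qed
    also have "\<dots> = Ls s" using assms(1) by (simp add: len_def)
    finally show ?thesis .
  qed
  have e: "(1 + 2*KK lam) * Ls s = Ls s + 2*(KK lam * Ls s)" by (simp add: algebra_simps)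
  show ?thesis unfolding e using a b c by (smt (verit))
qed

lemma osc_a:
  assumes "sa s < sb s" "sa s \<le> x" "x \<le> sb s" "1/6 \<le> lam" "lam < 5/6"
  shows "\<bar>Fs lam s x - sfa s\<bar> \<le> (1 + 2 * KK lam) * Ls s" "\<bar>Fs lam s x - sfb s\<bar> \<le> (1 + 2 * KK lam) * Ls s"
  using osc[OF assms(1-3) _ _ assms(4,5), of "sa s"] osc[OF assms(1-3) _ _ assms(4,5), of "sb s"] Fs_ends[OF assms(1), of lam] assms(1)
  by auto

lemma child03:
  assumes "sa s < sb s"
  shows "sa (child lam s 0) = sa s" "sfa (child lam s 0) = sfa s" "len (child lam s 0) = len s / 3"
    "Ls (child lam s 0) = Ls s / 3" "slope (child lam s 0) = slope s"
    "sb (child lam s 3) = sb s" "sfb (child lam s 3) = sfb s" "len (child lam s 3) = len s / 3"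
    "Ls (child lam s 3) = Ls s / 3" "slope (child lam s 3) = slope s"
    "sb (child lam s 0) = sa s + len s / 3" "sa (child lam s 3) = sb s - len s / 3"
proof -
  obtain a fa l m where l: "l > 0" and s: "s = Seg a fa (a+l) (fa + m*l)" using seg_obtain[OF assms(1)] .
  have bs: "slope s = m" "len s = l" "Ls s = l * sqrt (1 + m^2)" using seg_basic[OF l] s by auto
  show "sa (child lam s 0) = sa s" "sfa (child lam s 0) = sfa s" "len (child lam s 0) = len s / 3"
    "Ls (child lam s 0) = Ls s / 3" "slope (child lam s 0) = slope s"
    "sb (child lam s 3) = sb s" "sfb (child lam s 3) = sfb s" "len (child lam s 3) = len s / 3"
    "Ls (child lam s 3) = Ls s / 3" "slope (child lam s 3) = slope s"
    "sb (child lam s 0) = sa s + len s / 3" "sa (child lam s 3) = sb s - len s / 3"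
    unfolding bs using child_facts[OF l, of lam a fa m] unfolding s child_eqs[OF l]
    by (simp_all add: Ls_def)
qed

lemma LA_j:
  assumes "sa s < sb s" "sa s \<le> x" "x \<le> sa s + len s / 3^j" "1/6 \<le> lam" "lam < 5/6"
  shows "\<bar>Fs lam s x - sfa s\<bar> \<le> (1 + 2 * KK lam) * Ls s / 3^j"
  using assms
proof (induction j arbitrary: s)
  case 0
  then show ?case using osc_a(1)[OF 0(1,2) _ 0(4,5)] by (simp add: len_def)
next
  case (Suc j)
  let ?c = "child lam s 0"
  have v: "sa ?c < sb ?c" using child_valid[OF Suc(2), of 0] by simp
  have c: "sa ?c = sa s" "sfa ?c = sfa s" "len ?c = len s / 3" "Ls ?c = Ls s / 3" "sb ?c = sa s + len s / 3"
    using child03[OF Suc(2)] by auto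
  have lp: "len s > 0" using Suc(2) by (simp add: len_def)
  have "len s / 3^(Suc j) \<le> len s / 3" using lp by (simp add: field_simps)
  then have xc: "x \<le> sb ?c" using Suc(4) c by simp
  have fse: "Fs lam s x = Fs lam ?c x" using Fs_child[OF Suc(2), of 0] xc c Suc(3,5,6) by simp
  have "x \<le> sa ?c + len ?c / 3^j" using Suc(4) c by (simp add: field_simps)
  moreover have "sa ?c \<le> x" using c Suc(3) by simp
  ultimately have "\<bar>Fs lam ?c x - sfa ?c\<bar> \<le> (1 + 2 * KK lam) * Ls ?c / 3^j"
    using Suc.IH[OF v _ _ Suc(5,6)] by blast
  moreover have "(1 + 2 * KK lam) * Ls ?c / 3^j = (1 + 2 * KK lam) * Ls s / 3^(Suc j)" using c(4) by (simp only: power_Suc)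
  ultimately show ?case using c fse by (simp only:)
qed

lemma LB_j:
  assumes "sa s < sb s" "sb s - len s / 3^j \<le> x" "x \<le> sb s" "1/6 \<le> lam" "lam < 5/6"
  shows "\<bar>Fs lam s x - sfb s\<bar> \<le> (1 + 2 * KK lam) * Ls s / 3^j"
  using assms
proof (induction j arbitrary: s)
  case 0
  then show ?case using osc_a(2)[OF 0(1) _ 0(3) 0(4,5)] by (simp add: len_def)
next
  case (Suc j)
  let ?c = "child lam s 3"
  have v: "sa ?c < sb ?c" using child_valid[OF Suc(2), of 3] by simp
  have c: "sb ?c = sb s" "sfb ?c = sfb s" "len ?c = len s / 3" "Ls ?c = Ls s / 3" "sa ?c = sb s - len s / 3"
    using child03[OF Suc(2)] by auto
  have lp: "len s > 0" using Suc(2) by (simp add: len_def)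
  have "len s / 3^(Suc j) \<le> len s / 3" using lp by (simp add: field_simps)
  then have xc: "sa ?c \<le> x" using Suc(3) c by simp
  have fse: "Fs lam s x = Fs lam ?c x" using Fs_child[OF Suc(2), of 3] xc c Suc(4,5,6) by simp
  have "sb ?c - len ?c / 3^j \<le> x" using Suc(3) c by (simp add: field_simps)
  moreover have "x \<le> sb ?c" using c Suc(4) by simp
  ultimately have "\<bar>Fs lam ?c x - sfb ?c\<bar> \<le> (1 + 2 * KK lam) * Ls ?c / 3^j"
    using Suc.IH[OF v _ _ Suc(5,6)] by blast
  moreover have "(1 + 2 * KK lam) * Ls ?c / 3^j = (1 + 2 * KK lam) * Ls s / 3^(Suc j)" using c(4) by (simp only: power_Suc)
  ultimately show ?case using c fse by (simp only:)
qed

definition CA :: "real \<Rightarrow> real \<Rightarrow> real" where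
  "CA lam m = 3 * (1 + 2 * KK lam) * sqrt (1 + m^2)"

lemma CA_nonneg: "1/6 \<le> lam \<Longrightarrow> lam < 5/6 \<Longrightarrow> 0 \<le> CA lam m"
  using KK_nonneg[of lam] by (simp add: CA_def)

lemma find_scale:
  fixes d L :: real
  assumes "0 < d" "d \<le> L"
  obtains j :: nat where "L / 3^(Suc j) < d" "d \<le> L / 3^j"
proof -
  define P where "P j \<longleftrightarrow> L / 3^j < d" for j :: nat
  have L0: "L > 0" using assms by simp
  obtain n where n: "(1/3::real)^n < d / L" using real_arch_pow_inv[of "d/L" "1/3"] assms L0 by auto
  have "P n" using n L0 by (simp add: P_def field_simps power_one_over)
  then have ex: "\<exists>j. P j" by blast
  define J where "J = (LEAST j. P j)"
  have PJ: "P J" unfolding J_def by (rule LeastI_ex[OF ex])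
  have "\<not> P 0" using assms by (simp add: P_def)
  have "J \<noteq> 0"
  proof
    assume "J = 0" then show False using PJ \<open>\<not> P 0\<close> by simp
  qed
  then obtain j0 where J: "J = Suc j0" by (cases J) auto
  have "\<not> P j0" using J unfolding J_def by (metis lessI not_less_Least)
  then show ?thesis using that PJ J by (simp add: P_def not_less)
qed

lemma LA:
  assumes "sa s < sb s" "sa s \<le> x" "x \<le> sb s" "1/6 \<le> lam" "lam < 5/6"
  shows "\<bar>Fs lam s x - sfa s\<bar> \<le> CA lam (slope s) * (x - sa s)"
proof (cases "x = sa s")
  case True
  then show ?thesis using Fs_ends[OF assms(1), of lam] by simp
next
  case False
  have lp: "len s > 0" using assms(1) by (simp add: len_def)
  obtain j where j: "len s / 3^(Suc j) < x - sa s" "x - sa s \<le> len s / 3^j"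
    using find_scale[of "x - sa s" "len s"] False assms by (auto simp: len_def)
  have "\<bar>Fs lam s x - sfa s\<bar> \<le> (1 + 2 * KK lam) * Ls s / 3^j" using LA_j[OF assms(1,2) _ assms(4,5), of j] j by simp
  also have "\<dots> = CA lam (slope s) * (len s / 3^(Suc j))" by (simp add: CA_def Ls_def field_simps)
  also have "\<dots> \<le> CA lam (slope s) * (x - sa s)" using j CA_nonneg[OF assms(4,5)] by (intro mult_left_mono) auto
  finally show ?thesis .
qed

lemma LB:
  assumes "sa s < sb s" "sa s \<le> x" "x \<le> sb s" "1/6 \<le> lam" "lam < 5/6"
  shows "\<bar>Fs lam s x - sfb s\<bar> \<le> CA lam (slope s) * (sb s - x)"
proof (cases "x = sb s")
  case True
  then show ?thesis using Fs_ends[OF assms(1), of lam] by simp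
next
  case False
  have lp: "len s > 0" using assms(1) by (simp add: len_def)
  obtain j where j: "len s / 3^(Suc j) < sb s - x" "sb s - x \<le> len s / 3^j"
    using find_scale[of "sb s - x" "len s"] False assms by (auto simp: len_def)
  have "\<bar>Fs lam s x - sfb s\<bar> \<le> (1 + 2 * KK lam) * Ls s / 3^j" using LB_j[OF assms(1) _ assms(3-5), of j] j by simp
  also have "\<dots> = CA lam (slope s) * (len s / 3^(Suc j))" by (simp add: CA_def Ls_def field_simps)
  also have "\<dots> \<le> CA lam (slope s) * (sb s - x)" using j CA_nonneg[OF assms(4,5)] by (intro mult_left_mono) auto
  finally show ?thesis .
qed

definition CB :: "real \<Rightarrow> real \<Rightarrow> real" where
  "CB lam m = CA lam m + CA lam (m + 6*lam* sqrt (1 + m^2)) + CA lam (m - 6*lam* sqrt (1 + m^2))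
     + 6 * (1 + 2 * KK lam) * sqrt (1 + m^2)"

lemma CA_child_le:
  assumes "sa s < sb s" "k < 4" "1/6 \<le> lam" "lam < 5/6"
  shows "CA lam (slope (child lam s k)) + 6 * (1 + 2 * KK lam) * sqrt (1 + (slope s)^2) \<le> CB lam (slope s)"
proof -
  obtain a fa l m where l: "l > 0" and s: "s = Seg a fa (a+l) (fa + m*l)" using seg_obtain[OF assms(1)] .
  have bs: "slope s = m" using seg_basic[OF l] s by auto
  have nn: "0 \<le> CA lam z" for z using CA_nonneg[OF assms(3,4)] .
  have "k = 0 \<or> k = 1 \<or> k = 2 \<or> k = 3" using assms(2) by auto
  then show ?thesis unfolding bs CB_def using child_facts[OF l, of lam a fa m] nn[of m] nn[of "m + 6*lam* sqrt (1 + m^2)"] nn[of "m - 6*lam* sqrt (1 + m^2)"]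
    unfolding s by (elim disjE) auto
qed

lemma nd_gap: "sa s < sb s \<Longrightarrow> k < 4 \<Longrightarrow> len s / 6 \<le> fst (nd lam s (Suc k)) - fst (nd lam s k)"
proof -
  assume v: "sa s < sb s" and k: "k < 4"
  have "k = 0 \<or> k = 1 \<or> k = 2 \<or> k = 3" using k by auto
  then show ?thesis using nd_x[OF v, of lam] v by (elim disjE; simp add: numeral_eq_Suc field_simps len_def)
qed

lemma LBnode:
  assumes v: "sa s < sb s" and k: "1 \<le> k" "k \<le> 3" and x: "sa s \<le> x" "x \<le> sb s" and lam: "1/6 \<le> lam" "lam < 5/6"
  shows "\<bar>Fs lam s x - Fs lam s (fst (nd lam s k))\<bar> \<le> CB lam (slope s) * \<bar>x - fst (nd lam s k)\<bar>"
proof -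
  obtain k' where kk: "k = Suc k'" using k by (cases k) auto
  let ?e = "fst (nd lam s k)"
  let ?c' = "child lam s k'" and ?c = "child lam s k"
  have k'4: "k' < 4" "k < 4" using k kk by auto
  have v': "sa ?c' < sb ?c'" and vc: "sa ?c < sb ?c" using child_valid[OF v] k'4 by auto
  have ce: "sb ?c' = ?e" "sfb ?c' = snd (nd lam s k)" "sa ?c = ?e" "sfa ?c = snd (nd lam s k)"
    using kk by (simp_all add: child_ends)
  have e_in: "sa s \<le> ?e" "?e \<le> sb s" and c'_in: "sa s \<le> sa ?c'" and c_in: "sb ?c \<le> sb s"
  proof -
    have nin: "sa s \<le> fst (nd lam s i) \<and> fst (nd lam s i) \<le> sb s" if "i \<le> 4" for i
    proof -
      have "i = 0 \<or> i = 1 \<or> i = 2 \<or> i = 3 \<or> i = 4" using that by auto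
      then show ?thesis using nd_x[OF v, of lam] v by (elim disjE; simp add: field_simps)
    qed
    show "sa s \<le> ?e" "?e \<le> sb s" using nin[of k] k by auto
    show "sa s \<le> sa ?c'" using nin[of k'] k kk by (simp add: child_ends)
    show "sb ?c \<le> sb s" using nin[of "Suc k"] k by (simp add: child_ends)
  qed
  have Fe: "Fs lam s ?e = snd (nd lam s k)"
  proof -
    have "Fs lam s ?e = Fs lam ?c' ?e" using Fs_child[OF v k'4(1) _ _ lam] v' ce by simp
    also have "\<dots> = sfb ?c'" using Fs_ends[OF v', of lam] ce by simp
    finally show ?thesis using ce by simp
  qed
  have r0: "0 \<le> sqrt (1 + (slope s)^2)" by simp
  have K0: "0 \<le> KK lam" using KK_nonneg[OF lam] .
  consider "sa ?c' \<le> x" "x \<le> ?e" | "?e \<le> x" "x \<le> sb ?c" | "len s / 6 \<le> \<bar>x - ?e\<bar>"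
  proof -
    have g1: "len s / 6 \<le> ?e - sa ?c'" using nd_gap[OF v k'4(1), of lam] kk by (simp add: child_ends)
    have g2: "len s / 6 \<le> sb ?c - ?e" using nd_gap[OF v k'4(2), of lam] by (simp add: child_ends)
    show ?thesis
    proof (cases "x \<le> ?e")
      case True
      show ?thesis
      proof (cases "sa ?c' \<le> x")
        case True then show ?thesis using that(1) \<open>x \<le> ?e\<close> by blast
      next
        case False
        then have "len s / 6 \<le> \<bar>x - ?e\<bar>" using g1 \<open>x \<le> ?e\<close> by (simp add: abs_of_nonpos)
        then show ?thesis using that(3) by blast
      qed
    next
      case False
      show ?thesis
      proof (cases "x \<le> sb ?c")
        case True then show ?thesis using that(2) False by simp
      next
        case F2: False
        then have "len s / 6 \<le> \<bar>x - ?e\<bar>" using g2 False by (simp add: abs_of_nonneg)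
        then show ?thesis using that(3) by blast
      qed
    qed
  qed
  then show ?thesis
  proof cases
    case 1
    have "Fs lam s x = Fs lam ?c' x" using Fs_child[OF v k'4(1) _ _ lam] 1 ce by simp
    then have "\<bar>Fs lam s x - Fs lam s ?e\<bar> \<le> CA lam (slope ?c') * (?e - x)"
      using LB[OF v' 1(1) _ lam] 1 ce Fe by simp
    also have "\<dots> \<le> CB lam (slope s) * \<bar>x - ?e\<bar>"
    proof -
      have ab: "\<bar>x - ?e\<bar> = ?e - x" using 1 by simp
      have "0 \<le> 6 * (1 + 2 * KK lam) * sqrt (1 + (slope s)^2)" using K0 r0 by simp
      then have "CA lam (slope (child lam s k')) \<le> CB lam (slope s)" using CA_child_le[OF v k'4(1) lam] by linarith
      then show ?thesis unfolding ab using 1 by (intro mult_right_mono) auto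
    qed
    finally show ?thesis .
  next
    case 2
    have "Fs lam s x = Fs lam ?c x" using Fs_child[OF v k'4(2) _ _ lam] 2 ce by simp
    then have "\<bar>Fs lam s x - Fs lam s ?e\<bar> \<le> CA lam (slope ?c) * (x - ?e)"
      using LA[OF vc _ 2(2) lam] 2 ce Fe by simp
    also have "\<dots> \<le> CB lam (slope s) * \<bar>x - ?e\<bar>"
    proof -
      have ab: "\<bar>x - ?e\<bar> = x - ?e" using 2 by simp
      have "0 \<le> 6 * (1 + 2 * KK lam) * sqrt (1 + (slope s)^2)" using K0 r0 by simp
      then have "CA lam (slope (child lam s k)) \<le> CB lam (slope s)" using CA_child_le[OF v k'4(2) lam] by linarith
      then show ?thesis unfolding ab using 2 by (intro mult_right_mono) auto
    qed
    finally show ?thesis .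
  next
    case 3
    have "\<bar>Fs lam s x - Fs lam s ?e\<bar> \<le> (1 + 2 * KK lam) * Ls s" using osc[OF v x e_in lam] .
    also have "\<dots> = 6 * (1 + 2 * KK lam) * sqrt (1 + (slope s)^2) * (len s / 6)" by (simp add: Ls_def)
    also have "\<dots> \<le> 6 * (1 + 2 * KK lam) * sqrt (1 + (slope s)^2) * \<bar>x - ?e\<bar>"
      using 3 K0 r0 by (intro mult_left_mono) auto
    also have "\<dots> \<le> CB lam (slope s) * \<bar>x - ?e\<bar>"
    proof -
      have "6 * (1 + 2 * KK lam) * sqrt (1 + (slope s)^2) \<le> CB lam (slope s)"
        using CA_child_le[OF v k'4(2) lam] CA_nonneg[OF lam, of "slope (child lam s k)"] by linarith
      then show ?thesis by (intro mult_right_mono) auto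
    qed
    finally show ?thesis .
  qed
qed




fun chain :: "real \<Rightarrow> real \<Rightarrow> nat \<Rightarrow> seg \<times> bool" where
  "chain lam x0 0 = (Seg 0 0 1 0, True)"
| "chain lam x0 (Suc n) = (let s = fst (chain lam x0 n); ori = snd (chain lam x0 n); k = u n x0 in
      (child lam s (if ori then k else 3 - k), if k = 2 then \<not> ori else ori))"

lemma T_range: "0 \<le> y \<Longrightarrow> y \<le> 1 \<Longrightarrow> 0 \<le> T y \<and> T y \<le> 1"
  by (simp add: T_def)

lemma U_le: "U y \<le> 3" by (simp add: U_def)

lemma chain_idx: "chain lam x0 (Suc n) = (child lam (fst (chain lam x0 n)) (if snd (chain lam x0 n) then u n x0 else 3 - u n x0),
   if u n x0 = 2 then \<not> snd (chain lam x0 n) else snd (chain lam x0 n))"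
  by (simp add: Let_def)

lemma chain_inv:
  assumes "0 \<le> x0" "x0 \<le> 1"
  shows "sa (fst (chain lam x0 n)) < sb (fst (chain lam x0 n)) \<and> len (fst (chain lam x0 n)) \<le> (1/3)^n
    \<and> 0 \<le> (T^^n) x0 \<and> (T^^n) x0 \<le> 1
    \<and> x0 = (if snd (chain lam x0 n) then sa (fst (chain lam x0 n)) + len (fst (chain lam x0 n)) * (T^^n) x0
            else sb (fst (chain lam x0 n)) - len (fst (chain lam x0 n)) * (T^^n) x0)"
proof (induction n)
  case 0
  then show ?case using assms by (simp add: len_def)
next
  case (Suc n)
  define s where "s = fst (chain lam x0 n)"
  define ori where "ori = snd (chain lam x0 n)"
  define y where "y = (T^^n) x0"
  have IH: "sa s < sb s" "len s \<le> (1/3)^n" "0 \<le> y" "y \<le> 1"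
     "x0 = (if ori then sa s + len s * y else sb s - len s * y)"
    using Suc.IH unfolding s_def ori_def y_def by auto
  obtain a fa l m where l: "l > 0" and s: "s = Seg a fa (a+l) (fa + m*l)" using seg_obtain[OF IH(1)] .
  have ls: "len s = l" "sa s = a" "sb s = a + l" using s by (auto simp: len_def)
  have Y: "(T^^Suc n) x0 = T y" by (simp add: y_def)
  have u: "u n x0 = U y" by (simp add: u_def y_def)
  have ch: "chain lam x0 (Suc n) = (child lam s (if ori then U y else 3 - U y), if U y = 2 then \<not> ori else ori)"
    using chain_idx[of lam x0 n] unfolding s_def[symmetric] ori_def[symmetric] u .
  have Tr: "0 \<le> T y" "T y \<le> 1" using T_range[OF IH(3,4)] by auto
  have ce: "sa (child lam s 0) = a" "sb (child lam s 0) = a + l/3"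
    "sa (child lam s 1) = a + l/3" "sb (child lam s 1) = a + l/2"
    "sa (child lam s 2) = a + l/2" "sb (child lam s 2) = a + 2*l/3"
    "sa (child lam s 3) = a + 2*l/3" "sb (child lam s 3) = a + l"
    unfolding s child_eqs[OF l] by simp_all
  have cl: "len (child lam s 0) = l/3" "len (child lam s 1) = l/6" "len (child lam s 2) = l/6" "len (child lam s 3) = l/3"
    using child_facts[OF l, of lam a fa m] unfolding s by auto
  have lenb: "l/3 \<le> (1/3)^(Suc n)" "l/6 \<le> (1/3)^(Suc n)" using IH(2) ls l by auto
  have x0e: "x0 = (if ori then a + l * y else a + l - l * y)" using IH(5) ls by simp
  have val: "sa (child lam s j) < sb (child lam s j)" if "j < 4" for j using child_valid[OF IH(1) that] .
  consider "y < 1/3" | "1/3 \<le> y" "y < 1/2" | "1/2 \<le> y" "y < 2/3" | "2/3 \<le> y" by linarith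
  then show ?case
  proof cases
    case 1
    then have UT: "U y = 0" "T y = 3*y" by (simp_all add: U_def T_def)
    show ?thesis unfolding ch Y using UT ce cl lenb Tr x0e val[of 0] val[of 3]
      by (cases ori; simp add: UT ce cl x0e lenb Tr l; simp add: field_simps)
  next
    case 2
    then have UT: "U y = 1" "T y = 6*y - 2" by (simp_all add: U_def T_def)
    show ?thesis unfolding ch Y using UT ce cl lenb Tr x0e val[of 1] val[of 2]
      by (cases ori; simp add: UT ce cl x0e lenb Tr l; simp add: field_simps)
  next
    case 3
    then have UT: "U y = 2" "T y = 4 - 6*y" by (simp_all add: U_def T_def)
    show ?thesis unfolding ch Y using UT ce cl lenb Tr x0e val[of 1] val[of 2]
      by (cases ori; simp add: UT ce cl x0e lenb Tr l; simp add: field_simps)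
  next
    case 4
    then have UT: "U y = 3" "T y = 3*y - 2" by (simp_all add: U_def T_def)
    show ?thesis unfolding ch Y using UT ce cl lenb Tr x0e val[of 0] val[of 3]
      by (cases ori; simp add: UT ce cl x0e lenb Tr l; simp add: field_simps)
  qed
qed

lemma child_sub:
  assumes v: "sa s < sb s" and k: "k < 4"
  shows "sa s \<le> sa (child lam s k) \<and> sb (child lam s k) \<le> sb s"
proof -
  have nin: "sa s \<le> fst (nd lam s i) \<and> fst (nd lam s i) \<le> sb s" if "i \<le> 4" for i
  proof -
    have "i = 0 \<or> i = 1 \<or> i = 2 \<or> i = 3 \<or> i = 4" using that by auto
    then show ?thesis using nd_x[OF v, of lam] v by (elim disjE; simp add: field_simps)
  qed
  show ?thesis using nin[of k] nin[of "Suc k"] k by (simp add: child_ends)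
qed

abbreviation S where "S lam x0 n \<equiv> fst (chain lam x0 n)"

lemma chain_step: "S lam x0 (Suc n) = child lam (S lam x0 n) (if snd (chain lam x0 n) then u n x0 else 3 - u n x0)
   \<and> (if snd (chain lam x0 n) then u n x0 else 3 - u n x0) < 4"
  using chain_idx[of lam x0 n] U_le[of "(T^^n) x0"] by (auto simp: u_def)

lemma chain_in:
  assumes "0 \<le> x0" "x0 \<le> 1"
  shows "sa (S lam x0 n) \<le> x0 \<and> x0 \<le> sb (S lam x0 n)"
proof -
  note I = chain_inv[OF assms, of lam n]
  let ?y = "(T^^n) x0" and ?s = "S lam x0 n"
  have a: "0 \<le> len ?s * ?y" "len ?s * ?y \<le> len ?s" using I by (auto simp: len_def intro: mult_left_le)
  have b: "sb ?s = sa ?s + len ?s" by (simp add: len_def)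
  show ?thesis
  proof (cases "snd (chain lam x0 n)")
    case True
    then have "x0 = sa ?s + len ?s * ?y" using I by simp
    then show ?thesis using a b by linarith
  next
    case False
    then have "x0 = sb ?s - len ?s * ?y" using I by simp
    then show ?thesis using a b by linarith
  qed
qed

lemma chain_unit:
  assumes "0 \<le> x0" "x0 \<le> 1"
  shows "0 \<le> sa (S lam x0 n) \<and> sb (S lam x0 n) \<le> 1"
proof (induction n)
  case 0 then show ?case by simp
next
  case (Suc n)
  have v: "sa (S lam x0 n) < sb (S lam x0 n)" using chain_inv[OF assms, of lam n] by simp
  let ?j = "if snd (chain lam x0 n) then u n x0 else 3 - u n x0"
  have st: "S lam x0 (Suc n) = child lam (S lam x0 n) ?j" "?j < 4" using chain_step[of lam x0 n] by auto
  show ?case using child_sub[OF v st(2), of lam] Suc.IH unfolding st(1) by linarith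
qed

lemma chain_Fs:
  assumes "0 \<le> x0" "x0 \<le> 1" "1/6 \<le> lam" "lam < 5/6"
  shows "sa (S lam x0 n) \<le> z \<Longrightarrow> z \<le> sb (S lam x0 n) \<Longrightarrow> Fs lam (Seg 0 0 1 0) z = Fs lam (S lam x0 n) z"
proof (induction n)
  case 0 then show ?case by simp
next
  case (Suc n)
  let ?j = "if snd (chain lam x0 n) then u n x0 else 3 - u n x0"
  have v: "sa (S lam x0 n) < sb (S lam x0 n)" using chain_inv[OF assms(1,2), of lam n] by simp
  have st: "S lam x0 (Suc n) = child lam (S lam x0 n) ?j" "?j < 4" using chain_step[of lam x0 n] by auto
  have sub: "sa (S lam x0 n) \<le> z" "z \<le> sb (S lam x0 n)" using child_sub[OF v st(2), of lam] Suc.prems st(1) by auto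
  show ?case using Suc.IH[OF sub] Fs_child[OF v st(2) _ _ assms(3,4)] Suc.prems st(1) by simp
qed

lemma beta_Suc: "beta12 x (Suc k) = beta12 x k + (if u k x \<in> {1, 2} then 1 else 0)"
proof -
  have e: "{j. j < Suc k \<and> u j x \<in> {1, 2}} = (if u k x \<in> {1, 2} then insert k {j. j < k \<and> u j x \<in> {1, 2}} else {j. j < k \<and> u j x \<in> {1, 2}})"
    by (auto simp: less_Suc_eq)
  show ?thesis unfolding beta12_def e by simp
qed

lemma E_outer:
  assumes "x0 \<in> E_tilde"
  obtains N where "\<And>k. N \<le> k \<Longrightarrow> u k x0 \<notin> {1, 2}"
proof -
  obtain N where N: "\<And>n. n \<ge> N \<Longrightarrow> beta12 x0 n = beta12 x0 N" using assms by (auto simp: E_tilde_def)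
  have "u k x0 \<notin> {1, 2}" if "N \<le> k" for k
    using N[of k] N[of "Suc k"] that beta_Suc[of x0 k] by (auto split: if_splits)
  then show ?thesis using that by blast
qed

lemma slope_stable:
  assumes "0 \<le> x0" "x0 \<le> 1" "\<And>k. N \<le> k \<Longrightarrow> u k x0 \<notin> {1, 2}"
  shows "slope (S lam x0 n) = slope (S lam x0 (min n N))"
proof (induction n)
  case 0 then show ?case by simp
next
  case (Suc n)
  show ?case
  proof (cases "Suc n \<le> N")
    case True then show ?thesis by simp
  next
    case False
    then have nN: "N \<le> n" "min (Suc n) N = min n N" by auto
    have v: "sa (S lam x0 n) < sb (S lam x0 n)" using chain_inv[OF assms(1,2), of lam n] by simp
    have uu: "u n x0 = 0 \<or> u n x0 = 3" using assms(3)[OF nN(1)] U_le[of "(T^^n) x0"] by (auto simp: u_def)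
    let ?j = "if snd (chain lam x0 n) then u n x0 else 3 - u n x0"
    have "?j = 0 \<or> ?j = 3" using uu by auto
    then have "slope (S lam x0 (Suc n)) = slope (S lam x0 n)"
      using chain_step[of lam x0 n] child03(5,10)[OF v, of lam] by auto
    then show ?thesis using Suc.IH nN by simp
  qed
qed




lemma CB_nonneg: "1/6 \<le> lam \<Longrightarrow> lam < 5/6 \<Longrightarrow> 0 \<le> CB lam m"
  using CA_nonneg[of lam] KK_nonneg[of lam] by (simp add: CB_def add_nonneg_nonneg)

lemma lipschitz_E:
  assumes x0: "0 \<le> x0" "x0 \<le> 1" and E: "x0 \<in> E_tilde" and lam: "1/6 \<le> lam" "lam < 5/6"
  shows "\<exists>C\<ge>0. \<forall>x\<in>{0..1}. \<bar>F lam x - F lam x0\<bar> \<le> C * \<bar>x - x0\<bar>"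
proof -
  obtain N where N: "\<And>k. N \<le> k \<Longrightarrow> u k x0 \<notin> {1, 2}" using E_outer[OF E] by blast
  define C0 where "C0 = (\<Sum>i\<le>N. CA lam (slope (S lam x0 i)) + CB lam (slope (S lam x0 i)))"
  have Cb: "CA lam (slope (S lam x0 k)) \<le> C0 \<and> CB lam (slope (S lam x0 k)) \<le> C0" for k
  proof -
    have sl: "slope (S lam x0 k) = slope (S lam x0 (min k N))" using slope_stable[OF x0 N] .
    have "CA lam (slope (S lam x0 (min k N))) + CB lam (slope (S lam x0 (min k N))) \<le> C0"
      unfolding C0_def by (rule member_le_sum) (auto intro: add_nonneg_nonneg CA_nonneg[OF lam] CB_nonneg[OF lam])
    then show ?thesis using sl CA_nonneg[OF lam] CB_nonneg[OF lam] by (smt (verit))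
  qed
  have C00: "0 \<le> C0" using Cb[of 0] CA_nonneg[OF lam] by (meson order_trans)
  have main: "\<bar>F lam x - F lam x0\<bar> \<le> C0 * \<bar>x - x0\<bar>" if x: "0 \<le> x" "x \<le> 1" for x
  proof (cases "x = x0")
    case True then show ?thesis by simp
  next
    case False
    define P where "P n \<longleftrightarrow> \<not> (sa (S lam x0 n) \<le> x \<and> x \<le> sb (S lam x0 n))" for n
    have ex: "\<exists>n. P n"
    proof -
      obtain n where n: "(1/3::real)^n < \<bar>x - x0\<bar>" using real_arch_pow_inv[of "\<bar>x - x0\<bar>" "1/3"] False by auto
      have "len (S lam x0 n) \<le> (1/3)^n" using chain_inv[OF x0, of lam n] by simp
      moreover have "sa (S lam x0 n) \<le> x0" "x0 \<le> sb (S lam x0 n)" using chain_in[OF x0, of lam n] by auto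
      ultimately have "P n" using n unfolding P_def len_def by auto
      then show ?thesis by blast
    qed
    define n1 where "n1 = (LEAST n. P n)"
    have Pn1: "P n1" unfolding n1_def by (rule LeastI_ex[OF ex])
    have "\<not> P 0" using x by (simp add: P_def)
    then have "n1 \<noteq> 0" using Pn1 by (metis)
    then obtain n where n1: "n1 = Suc n" by (cases n1) auto
    have "\<not> P n" using n1 unfolding n1_def by (metis lessI not_less_Least)
    then have xs: "sa (S lam x0 n) \<le> x" "x \<le> sb (S lam x0 n)" by (auto simp: P_def)
    have xc: "\<not> (sa (S lam x0 (Suc n)) \<le> x \<and> x \<le> sb (S lam x0 (Suc n)))" using Pn1 n1 by (simp add: P_def)
    let ?s = "S lam x0 n"
    let ?j = "if snd (chain lam x0 n) then u n x0 else 3 - u n x0"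
    let ?c = "child lam ?s ?j"
    have st: "S lam x0 (Suc n) = ?c" "?j < 4" using chain_step[of lam x0 n] by auto
    have v: "sa ?s < sb ?s" using chain_inv[OF x0, of lam n] by simp
    have vc: "sa ?c < sb ?c" using child_valid[OF v st(2)] .
    have x0c: "sa ?c \<le> x0" "x0 \<le> sb ?c" using chain_in[OF x0, of lam "Suc n"] st(1) by auto
    have csub: "sa ?s \<le> sa ?c" "sb ?c \<le> sb ?s" using child_sub[OF v st(2), of lam] by auto
    have Fx: "F lam x = Fs lam ?s x" using F_Fs[of x lam] x chain_Fs[OF x0 lam xs] by simp
    have Fx0: "F lam x0 = Fs lam ?c x0" using F_Fs[of x0 lam] x0 chain_Fs[OF x0 lam, of "Suc n" x0] x0c st(1) by simp
    have eqFs: "Fs lam ?s z = Fs lam ?c z" if "sa ?c \<le> z" "z \<le> sb ?c" for z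
      using chain_Fs[OF x0 lam, of n z] chain_Fs[OF x0 lam, of "Suc n" z] that csub st(1) by simp
    have CAc: "CA lam (slope ?c) \<le> C0" using Cb[of "Suc n"] st(1) by simp
    have CBs: "CB lam (slope ?s) \<le> C0" using Cb[of n] by simp
    show ?thesis
    proof (cases "x < x0")
      case True
      then have xlt: "x < sa ?c" using xc st(1) x0c by auto
      have j0: "?j \<noteq> 0"
      proof
        assume h: "?j = 0"
        have "?c = child lam ?s 0" by (simp only: h)
        then have "sa ?c = sa ?s" using child03(1)[OF v, of lam] by simp
        then show False using xlt xs by simp
      qed
      have e: "sa ?c = fst (nd lam ?s ?j)" by (simp add: child_ends)
      have A: "\<bar>Fs lam ?s x - Fs lam ?s (sa ?c)\<bar> \<le> CB lam (slope ?s) * \<bar>x - sa ?c\<bar>"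
        using LBnode[OF v _ _ xs lam, of ?j] j0 st(2) e by simp
      have B: "\<bar>Fs lam ?c x0 - sfa ?c\<bar> \<le> CA lam (slope ?c) * (x0 - sa ?c)" using LA[OF vc x0c lam] .
      have Fe: "Fs lam ?s (sa ?c) = sfa ?c" using eqFs[of "sa ?c"] vc Fs_ends[OF vc, of lam] by simp
      have "\<bar>F lam x - F lam x0\<bar> \<le> \<bar>Fs lam ?s x - Fs lam ?s (sa ?c)\<bar> + \<bar>Fs lam ?c x0 - sfa ?c\<bar>"
        unfolding Fx Fx0 Fe by linarith
      also have "\<dots> \<le> C0 * (sa ?c - x) + C0 * (x0 - sa ?c)"
      proof -
        have ab: "\<bar>x - sa ?c\<bar> = sa ?c - x" using xlt by simp
        have "CB lam (slope ?s) * \<bar>x - sa ?c\<bar> \<le> C0 * (sa ?c - x)" unfolding ab using CBs xlt by (intro mult_right_mono) auto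
        moreover have "CA lam (slope ?c) * (x0 - sa ?c) \<le> C0 * (x0 - sa ?c)" using CAc x0c by (intro mult_right_mono) auto
        ultimately show ?thesis using A B by linarith
      qed
      also have "\<dots> = C0 * \<bar>x - x0\<bar>" using True by (simp add: algebra_simps)
      finally show ?thesis .
    next
      case False
      then have xgt: "sb ?c < x" using xc st(1) x0c by auto
      have j3: "?j \<noteq> 3"
      proof
        assume h: "?j = 3"
        have "?c = child lam ?s 3" by (simp only: h)
        then have "sb ?c = sb ?s" using child03(6)[OF v, of lam] by simp
        then show False using xgt xs by simp
      qed
      have e: "sb ?c = fst (nd lam ?s (Suc ?j))" by (simp add: child_ends)
      have A: "\<bar>Fs lam ?s x - Fs lam ?s (sb ?c)\<bar> \<le> CB lam (slope ?s) * \<bar>x - sb ?c\<bar>"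
        using LBnode[OF v _ _ xs lam, of "Suc ?j"] j3 st(2) e by simp
      have B: "\<bar>Fs lam ?c x0 - sfb ?c\<bar> \<le> CA lam (slope ?c) * (sb ?c - x0)" using LB[OF vc x0c lam] .
      have Fe: "Fs lam ?s (sb ?c) = sfb ?c" using eqFs[of "sb ?c"] vc Fs_ends[OF vc, of lam] by simp
      have "\<bar>F lam x - F lam x0\<bar> \<le> \<bar>Fs lam ?s x - Fs lam ?s (sb ?c)\<bar> + \<bar>Fs lam ?c x0 - sfb ?c\<bar>"
        unfolding Fx Fx0 Fe by linarith
      also have "\<dots> \<le> C0 * (x - sb ?c) + C0 * (sb ?c - x0)"
      proof -
        have ab: "\<bar>x - sb ?c\<bar> = x - sb ?c" using xgt by simp
        have "CB lam (slope ?s) * \<bar>x - sb ?c\<bar> \<le> C0 * (x - sb ?c)" unfolding ab using CBs xgt by (intro mult_right_mono) auto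
        moreover have "CA lam (slope ?c) * (sb ?c - x0) \<le> C0 * (sb ?c - x0)" using CAc x0c by (intro mult_right_mono) auto
        ultimately show ?thesis using A B by linarith
      qed
      also have "\<dots> = C0 * \<bar>x - x0\<bar>" using False by (simp add: algebra_simps)
      finally show ?thesis .
    qed
  qed
  show ?thesis using C00 main by auto
qed

lemma mid_bump:
  assumes v: "sa s < sb s"
  shows "fst (nd lam s 2) = (sa s + sb s) / 2 \<and> snd (nd lam s 2) - (sfa s + sfb s) / 2 = lam * Ls s"
proof -
  obtain a fa l m where l: "l > 0" and s: "s = Seg a fa (a+l) (fa + m*l)" using seg_obtain[OF v] .
  have bs: "Ls s = l * sqrt (1 + m^2)" using seg_basic[OF l] s by auto
  show ?thesis unfolding bs unfolding s using l by (simp add: nd_def Let_def field_simps)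
qed

lemma Fs_mid:
  assumes v: "sa s < sb s" and lam: "1/6 \<le> lam" "lam < 5/6"
  shows "Fs lam s (fst (nd lam s 2)) = snd (nd lam s 2)"
proof -
  have vc: "sa (child lam s 2) < sb (child lam s 2)" using child_valid[OF v, of 2] by simp
  have "Fs lam s (fst (nd lam s 2)) = Fs lam (child lam s 2) (sa (child lam s 2))"
    using Fs_child[OF v, where k=2 and x="fst (nd lam s 2)" and lam=lam] vc lam by (simp add: child_ends)
  also have "\<dots> = snd (nd lam s 2)" using Fs_ends[OF vc, of lam] by (simp add: child_ends)
  finally show ?thesis .
qed

lemma Ls_ge_len: "sa s < sb s \<Longrightarrow> len s \<le> Ls s"
  by (simp add: Ls_def len_def)

lemma sec_diff_alg:
  fixes p0 p1 ta tb te qa qb qe :: real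
  assumes "2 * te = ta + tb"
  shows "(p0 + te * (p1 + te * qe)) - ((p0 + ta * (p1 + ta * qa)) + (p0 + tb * (p1 + tb * qb))) / 2
    = te^2 * qe - (ta^2 * qa + tb^2 * qb) / 2"
proof -
  have "p1 * te = p1 * (ta + tb) / 2" using assms by simp
  then show ?thesis by (simp add: algebra_simps power2_eq_square add_divide_distrib diff_divide_distrib)
qed

lemma lin_rearr:
  fixes A B E PA PB PE X :: real
  shows "PE - (PA + PB) / 2 = X \<Longrightarrow> E - (A + B) / 2 = (E - PE) - ((A - PA) + (B - PB)) / 2 + X"
  by (simp add: field_simps)

lemma comb_bound:
  fixes x1 x2 x3 y1 y2 y3 u w :: real
  assumes "\<bar>x1\<bar> \<le> u" "\<bar>x2\<bar> \<le> u" "\<bar>x3\<bar> \<le> u" "\<bar>y1\<bar> \<le> w" "\<bar>y2\<bar> \<le> w" "\<bar>y3\<bar> \<le> w"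
  shows "x1 - (x2 + x3) / 2 + (y1 - (y2 + y3) / 2) \<le> 2 * u + 2 * w"
proof -
  have "x1 \<le> u" "- x2 \<le> u" "- x3 \<le> u" "y1 \<le> w" "- y2 \<le> w" "- y3 \<le> w" using assms by (auto simp: abs_le_iff)
  then show ?thesis by (simp add: field_simps)
qed

lemma not_holder:
  assumes x0: "0 \<le> x0" "x0 \<le> 1" and lam: "1/6 \<le> lam" "lam < 5/6" and al: "alpha > 1"
  shows "\<not> pointwise_holder (F lam) alpha x0"
proof
  assume "pointwise_holder (F lam) alpha x0"
  then obtain P C \<delta> where C: "C > 0" and d: "\<delta> > 0"
    and H: "\<forall>x\<in>{0..1}. \<bar>x - x0\<bar> < \<delta> \<longrightarrow> \<bar>F lam x - poly P (x - x0)\<bar> \<le> C * \<bar>x - x0\<bar> powr alpha"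
    unfolding pointwise_holder_def by blast
  obtain p0 P1 where P: "P = pCons p0 P1" by (cases P)
  obtain p1 Q where P1: "P1 = pCons p1 Q" by (cases P1)
  have polyP: "poly P t = p0 + t * (p1 + t * poly Q t)" for t by (simp add: P P1)
  obtain M where M: "M > 0" "\<And>t. norm t \<le> 1 \<Longrightarrow> norm (poly Q t) \<le> M"
    using poly_bound_exists[of 1 Q] by blast
  have t3: "(\<lambda>n. (1/3::real)^n) \<longlonglongrightarrow> 0" by (rule LIMSEQ_power_zero) simp
  have tp: "(\<lambda>n. ((1/3::real)^n) powr (alpha - 1)) \<longlonglongrightarrow> 0"
    by (rule tendsto_zero_powrI[OF t3 tendsto_const]) (use al in auto)
  have "(\<lambda>n. 2 * C * ((1/3::real)^n) powr (alpha - 1) + 2 * M * (1/3)^n) \<longlonglongrightarrow> 2 * C * 0 + 2 * M * 0"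
    by (intro tendsto_intros tp t3)
  then have ev1: "eventually (\<lambda>n. 2 * C * ((1/3::real)^n) powr (alpha - 1) + 2 * M * (1/3)^n < lam) sequentially"
    using lam by (intro order_tendstoD(2)) auto
  have ev2: "eventually (\<lambda>n. (1/3::real)^n < \<delta>) sequentially" using order_tendstoD(2)[OF t3 d] .
  obtain n where n1: "2 * C * ((1/3::real)^n) powr (alpha - 1) + 2 * M * (1/3)^n < lam" and n2: "(1/3::real)^n < \<delta>"
    using eventually_conj[OF ev1 ev2] unfolding eventually_sequentially by blast
  let ?s = "S lam x0 n"
  define a where "a = sa ?s"
  define b where "b = sb ?s"
  define e where "e = fst (nd lam ?s 2)"
  define l where "l = len ?s"
  have v: "sa ?s < sb ?s" and ln: "l \<le> (1/3)^n" using chain_inv[OF x0, of lam n] by (auto simp: l_def)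
  have l0: "0 < l" using v by (simp add: l_def len_def)
  have l1: "l \<le> 1" using ln by (metis order_trans one_le_numeral power_le_one_iff zero_le_divide_1_iff zero_le_numeral divide_le_eq_1 less_eq_real_def)
  have mb: "e = (a + b)/2" "snd (nd lam ?s 2) - (sfa ?s + sfb ?s) / 2 = lam * Ls ?s" using mid_bump[OF v, of lam] by (auto simp: a_def b_def e_def)
  have ab: "b = a + l" using v by (simp add: a_def b_def l_def len_def)
  have x0s: "a \<le> x0" "x0 \<le> b" using chain_in[OF x0, of lam n] by (auto simp: a_def b_def)
  have unit: "0 \<le> a" "b \<le> 1" using chain_unit[OF x0, of lam n] by (auto simp: a_def b_def)
  have Fa: "F lam a = sfa ?s" and Fb: "F lam b = sfb ?s" and Fe: "F lam e = snd (nd lam ?s 2)"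
  proof -
    have "F lam a = Fs lam ?s a" using F_Fs[of a lam] unit ab l0 chain_Fs[OF x0 lam, of n a] v by (simp add: a_def)
    then show "F lam a = sfa ?s" using Fs_ends[OF v, of lam] by (simp add: a_def)
    have "F lam b = Fs lam ?s b" using F_Fs[of b lam] unit ab l0 chain_Fs[OF x0 lam, of n b] v by (simp add: b_def)
    then show "F lam b = sfb ?s" using Fs_ends[OF v, of lam] by (simp add: b_def)
    have ea0: "a \<le> e" "e \<le> b" using mb ab l0 by auto
    have "F lam e = Fs lam ?s e" using F_Fs[of e lam] unit ea0 chain_Fs[OF x0 lam, of n e] by (simp add: a_def b_def)
    then show "F lam e = snd (nd lam ?s 2)" using Fs_mid[OF v lam] by (simp add: e_def)
  qed
  have bump: "lam * l \<le> F lam e - (F lam a + F lam b) / 2"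
    using mb(2) Fa Fb Fe Ls_ge_len[OF v] lam by (simp add: l_def mult_left_mono)
    have dist: "\<bar>z - x0\<bar> \<le> l" if "a \<le> z" "z \<le> b" for z using that x0s ab by auto
  have Hz: "\<bar>F lam z - poly P (z - x0)\<bar> \<le> C * l powr alpha" if "a \<le> z" "z \<le> b" for z
  proof -
    have "\<bar>F lam z - poly P (z - x0)\<bar> \<le> C * \<bar>z - x0\<bar> powr alpha"
      using H that unit dist[OF that] ln n2 by auto
    also have "\<dots> \<le> C * l powr alpha" using C al dist[OF that] by (intro mult_left_mono powr_mono2) auto
    finally show ?thesis .
  qed
  have Qz: "\<bar>(z - x0)^2 * poly Q (z - x0)\<bar> \<le> M * l^2" if "a \<le> z" "z \<le> b" for z
  proof -
    have "\<bar>poly Q (z - x0)\<bar> \<le> M" using M(2)[of "z - x0"] dist[OF that] l1 by auto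
    moreover have "(z - x0)^2 \<le> l^2" using dist[OF that] by (metis abs_ge_zero power2_abs power_mono)
    ultimately show ?thesis by (simp add: abs_mult mult_mono' mult.commute)
  qed
  have ea: "a \<le> e" "e \<le> b" using mb ab l0 by auto
  have pe: "poly P (e - x0) - (poly P (a - x0) + poly P (b - x0)) / 2
     = (e - x0)^2 * poly Q (e - x0) - ((a - x0)^2 * poly Q (a - x0) + (b - x0)^2 * poly Q (b - x0)) / 2"
  proof -
    have "e - x0 = ((a - x0) + (b - x0)) / 2" using mb(1) by simp
    then have "2 * (e - x0) = (a - x0) + (b - x0)" by simp
    then show ?thesis unfolding polyP by (rule sec_diff_alg)
  qed
  have "lam * l \<le> F lam e - (F lam a + F lam b) / 2" by (rule bump)
  also have "\<dots> = (F lam e - poly P (e - x0)) - ((F lam a - poly P (a - x0)) + (F lam b - poly P (b - x0))) / 2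
      + ((e - x0)^2 * poly Q (e - x0) - ((a - x0)^2 * poly Q (a - x0) + (b - x0)^2 * poly Q (b - x0)) / 2)"
    by (rule lin_rearr[OF pe])
  also have "\<dots> \<le> 2 * (C * l powr alpha) + 2 * (M * l^2)"
  proof (rule comb_bound)
    have aa: "a \<le> a" "a \<le> b" "b \<le> b" using ab l0 by auto
    show "\<bar>F lam e - poly P (e - x0)\<bar> \<le> C * l powr alpha" using Hz[OF ea] .
    show "\<bar>F lam a - poly P (a - x0)\<bar> \<le> C * l powr alpha" using Hz[OF aa(1,2)] .
    show "\<bar>F lam b - poly P (b - x0)\<bar> \<le> C * l powr alpha" using Hz[OF aa(2,3)] .
    show "\<bar>(e - x0)^2 * poly Q (e - x0)\<bar> \<le> M * l^2" using Qz[OF ea] .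
    show "\<bar>(a - x0)^2 * poly Q (a - x0)\<bar> \<le> M * l^2" using Qz[OF aa(1,2)] .
    show "\<bar>(b - x0)^2 * poly Q (b - x0)\<bar> \<le> M * l^2" using Qz[OF aa(2,3)] .
  qed
  also have "\<dots> = l * (2 * C * l powr (alpha - 1) + 2 * M * l)"
  proof -
    have "l powr alpha = l * l powr (alpha - 1)" using l0 by (simp add: powr_diff)
    then show ?thesis by (simp add: algebra_simps power2_eq_square)
  qed
  also have "\<dots> < l * lam"
  proof -
    have "l powr (alpha - 1) \<le> ((1/3)^n) powr (alpha - 1)" using ln l0 al by (intro powr_mono2) auto
    then have "2 * C * l powr (alpha - 1) + 2 * M * l \<le> 2 * C * ((1/3)^n) powr (alpha - 1) + 2 * M * (1/3)^n"
      using C M ln by (intro add_mono mult_left_mono) auto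
    then show ?thesis using n1 l0 by (intro mult_strict_left_mono) auto
  qed
  finally show False by simp
qed

theorem proposition3p11:
  fixes lam :: real and x0 :: real
  assumes "1/6 < lam" and "lam < 5/6"
    and "x0 \<in> {0..1}"
  shows "holder_exponent (F lam) x0 \<le> 1 \<and>
         (x0 \<in> E_tilde \<longrightarrow> holder_exponent (F lam) x0 = 1)"
proof -
  have lam: "1/6 \<le> lam" "lam < 5/6" using assms by auto
  have x0: "0 \<le> x0" "x0 \<le> 1" using assms by auto
  have le: "holder_exponent (F lam) x0 \<le> 1"
    unfolding holder_exponent_def
  proof (rule Sup_least)
    fix y assume "y \<in> ereal ` {alpha. alpha \<ge> 0 \<and> pointwise_holder (F lam) alpha x0}"
    then obtain alpha where y: "y = ereal alpha" and ph: "pointwise_holder (F lam) alpha x0" by auto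
    have "alpha \<le> 1" using not_holder[OF x0 lam, of alpha] ph by (cases "alpha > 1") auto
    then show "y \<le> 1" using y by simp
  qed
  have ge: "holder_exponent (F lam) x0 \<ge> 1" if E: "x0 \<in> E_tilde"
  proof -
    obtain C where C: "C \<ge> 0" "\<forall>x\<in>{0..1}. \<bar>F lam x - F lam x0\<bar> \<le> C * \<bar>x - x0\<bar>"
      using lipschitz_E[OF x0 E lam] by blast
    have "pointwise_holder (F lam) 1 x0"
      unfolding pointwise_holder_def
    proof (intro exI conjI)
      show "degree [:F lam x0:] \<le> nat \<lfloor>1::real\<rfloor>" by simp
      show "(0::real) < C + 1" using C by simp
      show "(0::real) < 1" by simp
      show "\<forall>x\<in>{0..1}. \<bar>x - x0\<bar> < 1 \<longrightarrow> \<bar>F lam x - poly [:F lam x0:] (x - x0)\<bar> \<le> (C + 1) * \<bar>x - x0\<bar> powr 1"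
      proof (intro ballI impI)
        fix x :: real assume x: "x \<in> {0..1}"
        have "\<bar>F lam x - F lam x0\<bar> \<le> C * \<bar>x - x0\<bar>" using C x by blast
        also have "\<dots> \<le> (C + 1) * \<bar>x - x0\<bar>" by (simp add: mult_right_mono)
        finally show "\<bar>F lam x - poly [:F lam x0:] (x - x0)\<bar> \<le> (C + 1) * \<bar>x - x0\<bar> powr 1" by simp
      qed
    qed
    then have "ereal 1 \<in> ereal ` {alpha. alpha \<ge> 0 \<and> pointwise_holder (F lam) alpha x0}" by auto
    then show ?thesis unfolding holder_exponent_def one_ereal_def by (rule Sup_upper)
  qed
  show ?thesis using le ge by (auto intro: antisym)
qed


end
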